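(* Let $v\in\mathrm{Box}(\Sigma_+)$ with $\gamma^v$ and $\gamma^v(t)$ ($t\in\mathcal I(y^v)$) as in the context. (i) If $1\notin\mathcal I(y^v)$, then $\mathcal S^{es}_+(\gamma^v)=\mathcal S_+(\gamma^v)$. If $1\in\mathcal I(y^v)$, then $\gamma^v(1)=\gamma^v$ and $\mathcal S_+(\gamma^v)\setminus\mathcal S^{es}_+(\gamma^v)=\mathcal S_-(\gamma^v)\setminus\mathcal S^{es}_-(\gamma^v)$. (ii) For every $t\in\mathcal I(y^v)$, the images of $\mathcal S^{es}_+(\gamma^v)$ and $\mathcal S^{es}_-(\gamma^v(t))$ under the projection $p:\mathbb L\to\mathbb L/\langle h\rangle$ coincide.
   Context: $N\cong\mathbb Z^d$ lattice, $\mathcal A=\{v_1,\dots,v_n\}\subset N$ generating $N$ with a homomorphism $\mathrm h:N\to\mathbb Z$, $\mathrm h(v_j)=1$; $\mathbb L=\{l\in\mathbb Z^n:\sum l_jv_j=0\}$; fix $\beta\in N$. $\Sigma_\pm$ are the fans supported on $\mathbb R_{\ge0}\mathrm{Conv}(\mathcal A)$ of two regular triangulations with vertices in $\mathcal A$ joined by an edge of the secondary polytope; there is a circuit $I$ with primitive relation $h\in\mathbb L$, $I_\pm=\{v_j:\pm h_j>0\}$, such that (with $\mathcal F\subset\mathcal A\setminus I$ separating if $\mathcal F\cup(I\setminus\{v\})$ generates a maximal cone of $\Sigma_\pm$ for all $v\in I_\pm$) $\Sigma_-$ arises from $\Sigma_+$ by replacing the maximal cones $\mathcal F\cup(I\setminus\{v\})$,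 $v\in I_+$, by $\mathcal F\cup(I\setminus\{v\})$, $v\in I_-$, for all separating $\mathcal F$; those cones are the essential maximal cones $\Sigma^{es}_\pm(d)$. $\mathrm{Box}(\Sigma_+)$: $v=\sum q^v_jv_j\in N$, $0\le q^v_j<1$, $q^v_j=0$ unless $v_j$ spans a ray of a fixed maximal cone of $\Sigma_+$; $y^v_j=e^{2\pi iq^v_j}$. $\mathcal I(r)=\{t\in\mathbb C^*:r_jt^{h_j}=1$ for some $j$ with $v_j\in I_-\}$. For $v\in\mathrm{Box}(\Sigma_+)$ choose $\gamma^v\in\mathbb Q^n$ with $e^{2\pi i\gamma^v_j}=y^v_j$ and $\sum\gamma^v_jv_j=\beta$; for each $t\in\mathcal I(y^v)$ (a root of unity) fix $\theta_t\in\mathbb Q$ with $e^{2\pi i\theta_t}=t$, with $\theta_1=0$, and set $\gamma^v(t)=\gamma^v+\theta_th$. For a fan $\Sigma$ (one of $\Sigma_\pm$), $\gamma\in\mathbb Q^n$ and $l\in\mathbb L$, $\mathrm{Supp}(l)=\{v_j:l_j+\gamma_j\notin\mathbb Z_{\ge0}\}$; $\mathcal S_\pm(\gamma)$ is the set of $l\in\mathbb L$ such that all elements of $\mathrm{Supp}(l)$ generate rays of one maximal cone of $\Sigma_\pm$, and $\mathcal S^{es}_\pm(\gamma)$ the set of $l$ such that this holds for one essential maximal cone of $\Sigma_\pm$. *)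

theory Defs
  imports "HOL-Analysis.Analysis"
begin

text \<open>The lattice N is int^'d; the points of A are v 0, ..., v (n-1).
  Index sets S of {..<n} stand for the cones generated by the v j, j in S.\<close>

definition rvec :: "int^'d \<Rightarrow> real^'d" where
  "rvec x = (\<chi> i. real_of_int (x $ i))"

text \<open>The relation lattice L (elements of Z^n as functions nat => int vanishing beyond n).\<close>
definition latL :: "nat \<Rightarrow> (nat \<Rightarrow> int^'d) \<Rightarrow> (nat \<Rightarrow> int) set" where
  "latL n v = {l. (\<forall>j\<ge>n. l j = 0) \<and> (\<Sum>j<n. l j *s v j) = 0}"

text \<open>Regular triangulation of A with vertices in A (height function w, lower faces
  cut out by linear functionals psi, which are the affine functions on the slice h = 1).\<close>
definition regular_triangulation :: "nat \<Rightarrow> (nat \<Rightarrow> int^'d) \<Rightarrow> nat set set \<Rightarrow> bool" where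
  "regular_triangulation n v T \<longleftrightarrow> (\<exists>w::nat \<Rightarrow> real.
     (\<forall>\<psi>::real^'d. (\<forall>k<n. \<psi> \<bullet> rvec (v k) \<le> w k) \<longrightarrow>
        independent (rvec ` v ` {k. k < n \<and> \<psi> \<bullet> rvec (v k) = w k})) \<and>
     T = {S. \<exists>\<psi>::real^'d. (\<forall>k<n. \<psi> \<bullet> rvec (v k) \<le> w k) \<and>
              S = {k. k < n \<and> \<psi> \<bullet> rvec (v k) = w k} \<and> card S = CARD('d)})"

text \<open>Volume of a simplex (up to a global constant factor), via the pyramid over it with apex 0.\<close>
definition simplex_vol :: "(nat \<Rightarrow> int^'d) \<Rightarrow> nat set \<Rightarrow> real" where
  "simplex_vol v S = measure lebesgue (convex hull (insert 0 (rvec ` v ` S)))"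

definition gkz :: "(nat \<Rightarrow> int^'d) \<Rightarrow> nat set set \<Rightarrow> nat \<Rightarrow> real" where
  "gkz v T j = (\<Sum>S\<in>{S\<in>T. j \<in> S}. simplex_vol v S)"

text \<open>T1, T2 are regular triangulations joined by an edge of the secondary polytope
  (the convex hull of the GKZ vectors of all regular triangulations).\<close>
definition secondary_edge :: "nat \<Rightarrow> (nat \<Rightarrow> int^'d) \<Rightarrow> nat set set \<Rightarrow> nat set set \<Rightarrow> bool" where
  "secondary_edge n v T1 T2 \<longleftrightarrow>
     regular_triangulation n v T1 \<and> regular_triangulation n v T2 \<and> gkz v T1 \<noteq> gkz v T2 \<and>
     (\<exists>c::nat \<Rightarrow> real.
        {gkz v T | T. regular_triangulation n v T \<and>
            (\<forall>T'. regular_triangulation n v T' \<longrightarrow>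
               (\<Sum>j<n. c j * gkz v T' j) \<le> (\<Sum>j<n. c j * gkz v T j))}
        = {gkz v T1, gkz v T2})"

definition is_circuit :: "nat \<Rightarrow> (nat \<Rightarrow> int^'d) \<Rightarrow> nat set \<Rightarrow> bool" where
  "is_circuit n v I \<longleftrightarrow> I \<subseteq> {..<n} \<and> \<not> independent (rvec ` v ` I) \<and>
     (\<forall>j\<in>I. independent (rvec ` v ` (I - {j})))"

definition primitive_relation :: "nat \<Rightarrow> (nat \<Rightarrow> int^'d) \<Rightarrow> nat set \<Rightarrow> (nat \<Rightarrow> int) \<Rightarrow> bool" where
  "primitive_relation n v I h \<longleftrightarrow> h \<in> latL n v \<and> {j. h j \<noteq> 0} = I \<and>
     (\<forall>c::int. (\<forall>j. c dvd h j) \<longrightarrow> \<bar>c\<bar> = 1)"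

definition Iplus :: "nat \<Rightarrow> (nat \<Rightarrow> int) \<Rightarrow> nat set" where
  "Iplus n h = {j. j < n \<and> h j > 0}"

definition Iminus :: "nat \<Rightarrow> (nat \<Rightarrow> int) \<Rightarrow> nat set" where
  "Iminus n h = {j. j < n \<and> h j < 0}"

definition separating_plus :: "nat \<Rightarrow> nat set \<Rightarrow> (nat \<Rightarrow> int) \<Rightarrow> nat set set \<Rightarrow> nat set \<Rightarrow> bool" where
  "separating_plus n I h T F \<longleftrightarrow> F \<subseteq> {..<n} - I \<and> (\<forall>j\<in>Iplus n h. F \<union> (I - {j}) \<in> T)"

definition separating_minus :: "nat \<Rightarrow> nat set \<Rightarrow> (nat \<Rightarrow> int) \<Rightarrow> nat set set \<Rightarrow> nat set \<Rightarrow> bool" where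
  "separating_minus n I h T F \<longleftrightarrow> F \<subseteq> {..<n} - I \<and> (\<forall>j\<in>Iminus n h. F \<union> (I - {j}) \<in> T)"

text \<open>Essential maximal cones of Sigma_+ (given T = Sigma_+) and of Sigma_- (given T = Sigma_-).\<close>
definition ess_plus :: "nat \<Rightarrow> nat set \<Rightarrow> (nat \<Rightarrow> int) \<Rightarrow> nat set set \<Rightarrow> nat set set" where
  "ess_plus n I h T = {F \<union> (I - {j}) | F j. separating_plus n I h T F \<and> j \<in> Iplus n h}"

definition ess_minus :: "nat \<Rightarrow> nat set \<Rightarrow> (nat \<Rightarrow> int) \<Rightarrow> nat set set \<Rightarrow> nat set set" where
  "ess_minus n I h T = {F \<union> (I - {j}) | F j. separating_minus n I h T F \<and> j \<in> Iminus n h}"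

definition supp_set :: "nat \<Rightarrow> (nat \<Rightarrow> real) \<Rightarrow> (nat \<Rightarrow> int) \<Rightarrow> nat set" where
  "supp_set n \<gamma> l = {j. j < n \<and> \<not> (\<exists>k::nat. real_of_int (l j) + \<gamma> j = real k)}"

definition S_set :: "nat \<Rightarrow> (nat \<Rightarrow> int^'d) \<Rightarrow> nat set set \<Rightarrow> (nat \<Rightarrow> real) \<Rightarrow> (nat \<Rightarrow> int) set" where
  "S_set n v C \<gamma> = {l \<in> latL n v. \<exists>\<sigma>\<in>C. supp_set n \<gamma> l \<subseteq> \<sigma>}"

definition expi :: "real \<Rightarrow> complex" where
  "expi x = exp (2 * of_real pi * \<i> * of_real x)"

definition Icirc :: "nat \<Rightarrow> (nat \<Rightarrow> int) \<Rightarrow> (nat \<Rightarrow> complex) \<Rightarrow> complex set" where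
  "Icirc n h r = {t. t \<noteq> 0 \<and> (\<exists>j\<in>Iminus n h. r j * t powi (h j) = 1)}"

definition proj_h :: "(nat \<Rightarrow> int) \<Rightarrow> (nat \<Rightarrow> int) \<Rightarrow> (nat \<Rightarrow> int) set" where
  "proj_h h l = {(\<lambda>j. l j + k * h j) | k::int. True}"

end

theory Submission
  imports Defs
begin

lemma expi_diff_Ints: assumes "expi x = expi y" shows "x - y \<in> \<int>"
proof -
  from assms obtain m :: int where m: "2 * of_real pi * \<i> * of_real x = 2 * of_real pi * \<i> * of_real y + (of_int (2 * m) * pi) * \<i>"
    unfolding expi_def exp_eq by blast
  hence "complex_of_real (2*pi*x) * \<i> = complex_of_real (2*pi*y + 2*m*pi) * \<i>"
    by (simp add: algebra_simps)
  hence "complex_of_real (2*pi*x) = complex_of_real (2*pi*y + 2*m*pi)"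
    by (metis complex_i_not_zero mult_cancel_right)
  hence "2*pi*x = 2*pi*y + 2*m*pi" using of_real_eq_iff by blast
  hence "pi * (2*x) = pi * (2*(y + m))" by (simp add: algebra_simps)
  hence "2*x = 2*(y+m)" using pi_neq_zero mult_cancel_left by blast
  hence "x = y + m" by simp
  thus ?thesis by simp
qed

lemma expi_0: "expi 0 = 1" by (simp add: expi_def)

lemma expi_add: "expi (x + y) = expi x * expi y"
  by (simp add: expi_def distrib_left exp_add)

lemma expi_powi: "expi x powi m = expi (x * of_int m)"
  by (simp add: expi_def exp_power_int algebra_simps)

lemma nat_of_Ints: assumes "x \<in> \<int>" "x \<ge> 0" shows "\<exists>k::nat. x = real k"
proof -
  from assms(1) obtain m where "x = of_int m" by (auto elim: Ints_cases)
  with assms(2) show ?thesis by (intro exI[of _ "nat m"]) simp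
qed

lemma nat_imp_Ints: "x = real (k::nat) \<Longrightarrow> x \<in> \<int>" by simp

lemma rvec_sum: "rvec (\<Sum>j<n. l j *s v j) = (\<Sum>j<n. real_of_int (l j) *\<^sub>R rvec (v j))"
  by (simp add: rvec_def vec_eq_iff)

lemma latL_inner: assumes "l \<in> latL n v"
  shows "(\<Sum>j<n. real_of_int (l j) * (\<psi> \<bullet> rvec (v j))) = 0"
proof -
  have "(\<Sum>j<n. l j *s v j) = 0" using assms by (simp add: latL_def)
  hence "rvec (\<Sum>j<n. l j *s v j) = 0" by (simp add: rvec_def vec_eq_iff)
  hence "\<psi> \<bullet> (\<Sum>j<n. real_of_int (l j) *\<^sub>R rvec (v j)) = 0" by (simp add: rvec_sum)
  thus ?thesis by (simp add: inner_sum_right)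
qed

lemma key_lemma:
  assumes reg: "regular_triangulation n v T" and s: "\<sigma> \<in> T" and t: "\<tau> \<in> T"
    and sp: "Iplus n h \<subseteq> \<sigma>" and tm: "Iminus n h \<subseteq> \<tau>"
    and hL: "h \<in> latL n v" and hI: "{j. h j \<noteq> 0} = I" and In: "I \<subseteq> {..<n}"
    and dep: "\<not> independent (rvec ` v ` I)"
  shows False
proof -
  obtain w :: "nat \<Rightarrow> real" where
    ind: "\<forall>\<psi>::real^'a. (\<forall>k<n. \<psi> \<bullet> rvec (v k) \<le> w k) \<longrightarrow>
        independent (rvec ` v ` {k. k < n \<and> \<psi> \<bullet> rvec (v k) = w k})" and
    TT: "T = {S. \<exists>\<psi>::real^'a. (\<forall>k<n. \<psi> \<bullet> rvec (v k) \<le> w k) \<and>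
              S = {k. k < n \<and> \<psi> \<bullet> rvec (v k) = w k} \<and> card S = CARD('a)}"
    using reg unfolding regular_triangulation_def by blast
  obtain \<psi>1 :: "real^'a" where p1: "\<forall>k<n. \<psi>1 \<bullet> rvec (v k) \<le> w k" and
    s1: "\<sigma> = {k. k < n \<and> \<psi>1 \<bullet> rvec (v k) = w k}" using s TT by blast
  obtain \<psi>2 :: "real^'a" where p2: "\<forall>k<n. \<psi>2 \<bullet> rvec (v k) \<le> w k" and
    s2: "\<tau> = {k. k < n \<and> \<psi>2 \<bullet> rvec (v k) = w k}" using t TT by blast
  define a where "a j = \<psi>1 \<bullet> rvec (v j)" for j
  define b where "b j = \<psi>2 \<bullet> rvec (v j)" for j
  have sa: "(\<Sum>j<n. real_of_int (h j) * a j) = 0" unfolding a_def by (rule latL_inner[OF hL])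
  have sb: "(\<Sum>j<n. real_of_int (h j) * b j) = 0" unfolding b_def by (rule latL_inner[OF hL])
  have nn: "\<forall>j\<in>{..<n}. 0 \<le> real_of_int (h j) * (a j - b j)"
  proof
    fix j assume j: "j \<in> {..<n}"
    show "0 \<le> real_of_int (h j) * (a j - b j)"
    proof (cases "h j > 0")
      case True
      hence "j \<in> \<sigma>" using sp j by (auto simp: Iplus_def)
      hence "a j = w j" using s1 a_def by auto
      moreover have "b j \<le> w j" using p2 j b_def by auto
      ultimately show ?thesis using True by simp
    next
      case False
      show ?thesis
      proof (cases "h j < 0")
        case True
        hence "j \<in> \<tau>" using tm j by (auto simp: Iminus_def)
        hence "b j = w j" using s2 b_def by auto
        moreover have "a j \<le> w j" using p1 j a_def by auto
        ultimately show ?thesis using True by (simp add: mult_nonpos_nonpos)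
      next
        case False
        with \<open>\<not> h j > 0\<close> have "h j = 0" by simp
        thus ?thesis by simp
      qed
    qed
  qed
  have "(\<Sum>j<n. real_of_int (h j) * (a j - b j)) = 0"
    using sa sb by (simp add: right_diff_distrib sum_subtractf)
  hence z: "\<forall>j\<in>{..<n}. real_of_int (h j) * (a j - b j) = 0"
    using nn by (subst (asm) sum_nonneg_eq_0_iff) auto
  have "I \<subseteq> {k. k < n \<and> \<psi>2 \<bullet> rvec (v k) = w k}"
  proof
    fix j assume jI: "j \<in> I"
    hence j: "j < n" "h j \<noteq> 0" using In hI by auto
    show "j \<in> {k. k < n \<and> \<psi>2 \<bullet> rvec (v k) = w k}"
    proof (cases "h j > 0")
      case True
      hence "j \<in> \<sigma>" using sp j by (auto simp: Iplus_def)
      hence "a j = w j" using s1 a_def by auto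
      moreover have "a j = b j" using z j by auto
      ultimately show ?thesis using j b_def by auto
    next
      case False
      hence "j \<in> \<tau>" using tm j by (auto simp: Iminus_def)
      thus ?thesis using s2 by auto
    qed
  qed
  hence sub: "rvec ` v ` I \<subseteq> rvec ` v ` {k. k < n \<and> \<psi>2 \<bullet> rvec (v k) = w k}"
    by (intro image_mono)
  have "independent (rvec ` v ` {k. k < n \<and> \<psi>2 \<bullet> rvec (v k) = w k})"
    using ind p2 by blast
  hence "independent (rvec ` v ` I)"
    using sub by (rule independent_mono)
  with dep show False by simp
qed


lemma ht_zero: fixes ht :: "int^'d \<Rightarrow> int" assumes "\<forall>x y. ht (x + y) = ht x + ht y" shows "ht 0 = (0::int)"
proof -
  have "ht (0 + 0) = ht 0 + ht 0" using assms by blast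
  hence "ht 0 = ht 0 + ht 0" by (simp only: add_0_left)
  thus ?thesis by linarith
qed

lemma ht_smult:
  fixes ht :: "int^'d \<Rightarrow> int"
  assumes add: "\<forall>x y. ht (x + y) = ht x + ht y" shows "ht (k *s x) = k * ht x"
proof -
  have nat: "ht (int m *s x) = int m * ht x" for m
  proof (induction m)
    case 0 thus ?case using ht_zero[OF add] by simp
  next
    case (Suc m)
    have "int (Suc m) *s x = int m *s x + x" by (simp add: vec_eq_iff algebra_simps)
    thus ?case using Suc add by (simp add: algebra_simps)
  qed
  have neg: "ht (- y) = - ht y" for y
  proof -
    have "ht (y + - y) = ht y + ht (- y)" using add by blast
    thus ?thesis using ht_zero[OF add] by simp
  qed
  show ?thesis
  proof (cases "k \<ge> 0")
    case True
    then obtain m where "k = int m" by (metis nonneg_eq_int)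
    thus ?thesis using nat by simp
  next
    case False
    define m where "m = nat (- k)"
    have m: "k = - int m" using False m_def by simp
    have "k *s x = - (int m *s x)" using m by (simp add: vec_eq_iff)
    thus ?thesis using nat neg m by simp
  qed
qed

lemma ht_sum:
  fixes ht :: "int^'d \<Rightarrow> int" and n :: nat
  assumes add: "\<forall>x y. ht (x + y) = ht x + ht y" shows "ht (\<Sum>j<n. f j) = (\<Sum>j<n. ht (f j))"
  by (induction n) (simp_all add: ht_zero[OF add] add)

lemma proj_shift: "proj_h h (\<lambda>j. l j + k * h j) = proj_h h l"
proof (intro set_eqI iffI)
  fix x assume "x \<in> proj_h h (\<lambda>j. l j + k * h j)"
  then obtain k' where "x = (\<lambda>j. l j + k * h j + k' * h j)" by (auto simp: proj_h_def)
  hence "x = (\<lambda>j. l j + (k + k') * h j)" by (simp add: algebra_simps)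
  thus "x \<in> proj_h h l" by (auto simp: proj_h_def)
next
  fix x assume "x \<in> proj_h h l"
  then obtain k' where "x = (\<lambda>j. l j + k' * h j)" by (auto simp: proj_h_def)
  hence "x = (\<lambda>j. (l j + k * h j) + (k' - k) * h j)" by (simp add: algebra_simps)
  thus "x \<in> proj_h h (\<lambda>j. l j + k * h j)" unfolding proj_h_def by blast
qed

lemma latL_shift: assumes "l \<in> latL n v" "h \<in> latL n v" shows "(\<lambda>j. l j + k * h j) \<in> latL n v"
proof -
  have l0: "(\<Sum>j<n. l j *s v j) = 0" and h0: "(\<Sum>j<n. h j *s v j) = 0"
    using assms by (auto simp: latL_def)
  have "(\<Sum>j<n. (l j + k * h j) *s v j) = (\<Sum>j<n. l j *s v j) + k *s (\<Sum>j<n. h j *s v j)"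
    by (simp add: vec_eq_iff algebra_simps sum.distrib sum_distrib_left)
  thus ?thesis using assms l0 h0 by (auto simp: latL_def)
qed

lemma image_eq_both:
  assumes "\<And>a. a \<in> A \<Longrightarrow> \<exists>b\<in>B. f b = f a" "\<And>b. b \<in> B \<Longrightarrow> \<exists>a\<in>A. f a = f b"
  shows "f ` A = f ` B"
proof (intro equalityI subsetI)
  fix x assume "x \<in> f ` A"
  then obtain a where a: "a \<in> A" "x = f a" by blast
  then obtain b where "b \<in> B" "f b = f a" using assms(1) by blast
  thus "x \<in> f ` B" using a by (metis image_eqI)
next
  fix x assume "x \<in> f ` B"
  then obtain b where b: "b \<in> B" "x = f b" by blast
  then obtain a where "a \<in> A" "f a = f b" using assms(2) by blast
  thus "x \<in> f ` A" using b by (metis image_eqI)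
qed

lemma supp_iff: "i \<in> supp_set n g l \<longleftrightarrow> i < n \<and> \<not> (\<exists>k::nat. real_of_int (l i) + g i = real k)"
  by (simp add: supp_set_def)

lemma int_nonneg_nat: "x = real_of_int M \<Longrightarrow> 0 \<le> M \<Longrightarrow> \<exists>k::nat. x = real k"
  by (intro exI[of _ "nat M"]) simp


lemma prop_helper: "(A \<and> B \<longleftrightarrow> X \<and> B) \<Longrightarrow> (C \<and> D \<longleftrightarrow> X \<and> D) \<Longrightarrow> (X \<and> B \<longleftrightarrow> X \<and> D) \<Longrightarrow> (L \<and> A \<and> B \<longleftrightarrow> L \<and> C \<and> D)"
  by blast

theorem proposition4p6:
  fixes n :: nat and v :: "nat \<Rightarrow> int^'d" and ht :: "int^'d \<Rightarrow> int" and \<beta> :: "int^'d"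
    and Tp Tm :: "nat set set" and I :: "nat set" and h :: "nat \<Rightarrow> int"
    and \<sigma>0 :: "nat set" and q :: "nat \<Rightarrow> real" and vb :: "int^'d"
    and \<gamma> :: "nat \<Rightarrow> real" and \<theta> :: "complex \<Rightarrow> real"
  assumes inj: "inj_on v {..<n}"
    and gen: "\<forall>x::int^'d. \<exists>c::nat \<Rightarrow> int. x = (\<Sum>j<n. c j *s v j)"
    and ht_hom: "\<forall>x y. ht (x + y) = ht x + ht y"
    and ht_one: "\<forall>j<n. ht (v j) = 1"
    and edge: "secondary_edge n v Tp Tm"
    and circ: "is_circuit n v I"
    and prim: "primitive_relation n v I h"
    and flip: "Tm = (Tp - ess_plus n I h Tp)
                  \<union> {F \<union> (I - {j}) | F j. separating_plus n I h Tp F \<and> j \<in> Iminus n h}"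
    and box_cone: "\<sigma>0 \<in> Tp"
    and box_q: "\<forall>j<n. 0 \<le> q j \<and> q j < 1"
    and box_supp: "\<forall>j<n. j \<notin> \<sigma>0 \<longrightarrow> q j = 0"
    and box_pt: "(\<Sum>j<n. q j *\<^sub>R rvec (v j)) = rvec vb"
    and gamma_rat: "\<forall>j<n. \<gamma> j \<in> \<rat>"
    and gamma_exp: "\<forall>j<n. expi (\<gamma> j) = expi (q j)"
    and gamma_sum: "(\<Sum>j<n. \<gamma> j *\<^sub>R rvec (v j)) = rvec \<beta>"
    and theta: "\<forall>t\<in>Icirc n h (\<lambda>j. expi (q j)). \<theta> t \<in> \<rat> \<and> expi (\<theta> t) = t"
    and theta1: "\<theta> 1 = 0"
  shows "(1 \<notin> Icirc n h (\<lambda>j. expi (q j)) \<longrightarrow>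
            S_set n v (ess_plus n I h Tp) \<gamma> = S_set n v Tp \<gamma>)
       \<and> (1 \<in> Icirc n h (\<lambda>j. expi (q j)) \<longrightarrow>
            (\<lambda>j. \<gamma> j + \<theta> 1 * real_of_int (h j)) = \<gamma>
          \<and> S_set n v Tp \<gamma> - S_set n v (ess_plus n I h Tp) \<gamma>
            = S_set n v Tm \<gamma> - S_set n v (ess_minus n I h Tm) \<gamma>)
       \<and> (\<forall>t\<in>Icirc n h (\<lambda>j. expi (q j)).
            proj_h h ` S_set n v (ess_plus n I h Tp) \<gamma>
            = proj_h h ` S_set n v (ess_minus n I h Tm) (\<lambda>j. \<gamma> j + \<theta> t * real_of_int (h j)))"
proof -
  let ?Ip = "Iplus n h" and ?Im = "Iminus n h"
  define E where "E = ess_plus n I h Tp"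
  define New where "New = {F \<union> (I - {j}) | F j. separating_plus n I h Tp F \<and> j \<in> ?Im}"
  have reg_p: "regular_triangulation n v Tp" and reg_m: "regular_triangulation n v Tm"
    and gkzne: "gkz v Tp \<noteq> gkz v Tm" using edge by (auto simp: secondary_edge_def)
  have hL: "h \<in> latL n v" and hI: "{j. h j \<noteq> 0} = I" using prim by (auto simp: primitive_relation_def)
  have In: "I \<subseteq> {..<n}" and dep: "\<not> independent (rvec ` v ` I)" using circ by (auto simp: is_circuit_def)
  have hout: "\<And>j. j \<notin> I \<Longrightarrow> h j = 0" using hI by auto
  have IpI: "?Ip \<subseteq> I" using hI by (auto simp: Iplus_def)
  have ImI: "?Im \<subseteq> I" using hI by (auto simp: Iminus_def)
  have IpIm: "?Ip \<inter> ?Im = {}" by (auto simp: Iplus_def Iminus_def)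
  have key: "\<And>T \<sigma> \<tau>. regular_triangulation n v T \<Longrightarrow> \<sigma> \<in> T \<Longrightarrow> \<tau> \<in> T \<Longrightarrow> ?Ip \<subseteq> \<sigma> \<Longrightarrow> ?Im \<subseteq> \<tau> \<Longrightarrow> False"
    using key_lemma[OF _ _ _ _ _ hL hI In dep] by blast
  have Ine: "I \<noteq> {}" using dep independent_empty by auto
  have "ht (\<Sum>j<n. h j *s v j) = 0" using hL ht_zero[OF ht_hom] by (simp add: latL_def)
  hence sumh: "(\<Sum>j<n. h j) = 0" using ht_one by (simp add: ht_sum[OF ht_hom] ht_smult[OF ht_hom])
  obtain i0 where i0: "i0 \<in> I" using Ine by blast
  have i0n: "i0 < n" "h i0 \<noteq> 0" using i0 In hI by auto
  have Ipne: "?Ip \<noteq> {}"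
  proof
    assume "?Ip = {}"
    hence "\<forall>j\<in>{..<n}. 0 \<le> - h j" by (force simp: Iplus_def)
    moreover have "(\<Sum>j<n. - h j) = 0" using sumh by (simp add: sum_negf)
    ultimately have "\<forall>j\<in>{..<n}. - h j = 0" by (subst (asm) sum_nonneg_eq_0_iff) auto
    then show False using i0n by auto
  qed
  have Imne: "?Im \<noteq> {}"
  proof
    assume "?Im = {}"
    hence "\<forall>j\<in>{..<n}. 0 \<le> h j" by (force simp: Iminus_def)
    hence "\<forall>j\<in>{..<n}. h j = 0" using sumh by (subst (asm) sum_nonneg_eq_0_iff) auto
    then show False using i0n by auto
  qed
  obtain j0 where j0: "j0 \<in> ?Ip" using Ipne by blast
  obtain j1 where j1: "j1 \<in> ?Im" using Imne by blast
  have Tm_eq: "Tm = (Tp - E) \<union> New" using flip by (simp add: E_def New_def)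
  have "\<exists>F. separating_plus n I h Tp F"
  proof (rule ccontr)
    assume no: "\<not> (\<exists>F. separating_plus n I h Tp F)"
    hence "E = {}" "New = {}" unfolding E_def New_def ess_plus_def by auto
    hence "Tm = Tp" using Tm_eq by simp
    with gkzne show False by simp
  qed
  then obtain F0 where F0: "separating_plus n I h Tp F0" by blast
  have sepD: "\<And>F j. separating_plus n I h Tp F \<Longrightarrow> j \<in> ?Ip \<Longrightarrow> F \<union> (I - {j}) \<in> Tp"
    by (simp add: separating_plus_def)
  have EinTp: "E \<subseteq> Tp" unfolding E_def ess_plus_def using sepD by auto
  have EI: "\<And>F j. separating_plus n I h Tp F \<Longrightarrow> j \<in> ?Ip \<Longrightarrow> F \<union> (I - {j}) \<in> E"
    unfolding E_def ess_plus_def by blast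
  have NewI: "\<And>F j. separating_plus n I h Tp F \<Longrightarrow> j \<in> ?Im \<Longrightarrow> F \<union> (I - {j}) \<in> New"
    unfolding New_def by blast
  have noplus: "\<And>\<sigma>. \<sigma> \<in> Tp \<Longrightarrow> \<not> ?Ip \<subseteq> \<sigma>"
  proof
    fix \<sigma> assume "\<sigma> \<in> Tp" "?Ip \<subseteq> \<sigma>"
    moreover have "F0 \<union> (I - {j0}) \<in> Tp" using sepD F0 j0 by blast
    moreover have "?Im \<subseteq> F0 \<union> (I - {j0})" using ImI IpIm j0 by auto
    ultimately show False using key reg_p by blast
  qed
  have nominus: "\<And>\<sigma>. \<sigma> \<in> Tm \<Longrightarrow> \<not> ?Im \<subseteq> \<sigma>"
  proof
    fix \<sigma> assume "\<sigma> \<in> Tm" "?Im \<subseteq> \<sigma>"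
    moreover have "F0 \<union> (I - {j1}) \<in> Tm" using NewI F0 j1 Tm_eq by blast
    moreover have "?Ip \<subseteq> F0 \<union> (I - {j1})" using IpI IpIm j1 by auto
    ultimately show False using key reg_m by blast
  qed
  have Em: "ess_minus n I h Tm = New"
  proof
    show "ess_minus n I h Tm \<subseteq> New"
    proof
      fix \<sigma> assume "\<sigma> \<in> ess_minus n I h Tm"
      then obtain F j where \<sigma>: "\<sigma> = F \<union> (I - {j})" and sF: "separating_minus n I h Tm F"
        and j: "j \<in> ?Im" unfolding ess_minus_def by blast
      have "\<sigma> \<in> Tm" using sF j \<sigma> by (simp add: separating_minus_def)
      moreover have "?Ip \<subseteq> \<sigma>" using \<sigma> IpI IpIm j by auto
      ultimately have "\<sigma> \<notin> Tp" using noplus by blast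
      then show "\<sigma> \<in> New" using \<open>\<sigma> \<in> Tm\<close> Tm_eq by blast
    qed
    show "New \<subseteq> ess_minus n I h Tm"
    proof
      fix \<sigma> assume "\<sigma> \<in> New"
      then obtain F j where \<sigma>: "\<sigma> = F \<union> (I - {j})" and sF: "separating_plus n I h Tp F"
        and j: "j \<in> ?Im" unfolding New_def by blast
      have "separating_minus n I h Tm F" unfolding separating_minus_def
        using sF NewI Tm_eq by (auto simp: separating_plus_def)
      thus "\<sigma> \<in> ess_minus n I h Tm" using \<sigma> j unfolding ess_minus_def by blast
    qed
  qed
  have gq: "\<And>j. j < n \<Longrightarrow> \<gamma> j - q j \<in> \<int>" using gamma_exp expi_diff_Ints by blast

  have partA: "1 \<notin> Icirc n h (\<lambda>j. expi (q j)) \<longrightarrow> S_set n v E \<gamma> = S_set n v Tp \<gamma>"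
  proof
    assume n1: "1 \<notin> Icirc n h (\<lambda>j. expi (q j))"
    have Imsupp: "?Im \<subseteq> supp_set n \<gamma> l" for l
    proof
      fix j assume j: "j \<in> ?Im"
      hence jn: "j < n" by (simp add: Iminus_def)
      have "expi (q j) \<noteq> 1" using n1 j by (auto simp: Icirc_def)
      hence "q j \<noteq> 0" using expi_0 by auto
      hence qj: "0 < q j" "q j < 1" using box_q jn by auto
      show "j \<in> supp_set n \<gamma> l"
      proof (rule ccontr)
        assume "j \<notin> supp_set n \<gamma> l"
        then obtain k :: nat where k: "real_of_int (l j) + \<gamma> j = real k" using jn by (auto simp: supp_set_def)
        have "\<gamma> j = real k - real_of_int (l j)" using k by simp
        hence "\<gamma> j \<in> \<int>" by simp
        have "\<gamma> j - (\<gamma> j - q j) \<in> \<int>" using \<open>\<gamma> j \<in> \<int>\<close> gq[OF jn] by (rule Ints_diff)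
        hence "q j \<in> \<int>" by simp
        then obtain m where "q j = of_int m" by (auto elim: Ints_cases)
        with qj show False by auto
      qed
    qed
    show "S_set n v E \<gamma> = S_set n v Tp \<gamma>"
    proof
      show "S_set n v E \<gamma> \<subseteq> S_set n v Tp \<gamma>" using EinTp by (auto simp: S_set_def)
      show "S_set n v Tp \<gamma> \<subseteq> S_set n v E \<gamma>"
      proof
        fix l assume "l \<in> S_set n v Tp \<gamma>"
        then obtain \<sigma> where l: "l \<in> latL n v" "\<sigma> \<in> Tp" "supp_set n \<gamma> l \<subseteq> \<sigma>" by (auto simp: S_set_def)
        have "\<sigma> \<in> E"
        proof (rule ccontr)
          assume "\<sigma> \<notin> E" hence "\<sigma> \<in> Tm" using Tm_eq l by blast
          moreover have "?Im \<subseteq> \<sigma>" using Imsupp l by blast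
          ultimately show False using nominus by blast
        qed
        thus "l \<in> S_set n v E \<gamma>" using l by (auto simp: S_set_def)
      qed
    qed
  qed

  have c1: "(\<exists>\<tau>\<in>E. supp_set n \<gamma> l \<subseteq> \<tau>) \<longleftrightarrow> (\<exists>\<tau>\<in>New. supp_set n \<gamma> l \<subseteq> \<tau>)"
    if \<sigma>: "\<sigma> \<in> Tp - E" and ss: "supp_set n \<gamma> l \<subseteq> \<sigma>" for l \<sigma>
  proof
    assume "\<exists>\<tau>\<in>E. supp_set n \<gamma> l \<subseteq> \<tau>"
    then obtain F j where sF: "separating_plus n I h Tp F" and j: "j \<in> ?Ip"
      and st: "supp_set n \<gamma> l \<subseteq> F \<union> (I - {j})" unfolding E_def ess_plus_def by blast
    have "\<sigma> \<in> Tm" using \<sigma> Tm_eq by blast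
    hence "\<not> ?Im \<subseteq> supp_set n \<gamma> l" using nominus ss by blast
    then obtain j' where j': "j' \<in> ?Im" "j' \<notin> supp_set n \<gamma> l" by blast
    have "supp_set n \<gamma> l \<subseteq> F \<union> (I - {j'})" using st j' ImI by auto
    thus "\<exists>\<tau>\<in>New. supp_set n \<gamma> l \<subseteq> \<tau>" using NewI sF j' by blast
  next
    assume "\<exists>\<tau>\<in>New. supp_set n \<gamma> l \<subseteq> \<tau>"
    then obtain F j where sF: "separating_plus n I h Tp F" and j: "j \<in> ?Im"
      and st: "supp_set n \<gamma> l \<subseteq> F \<union> (I - {j})" unfolding New_def by blast
    have "\<not> ?Ip \<subseteq> supp_set n \<gamma> l" using noplus ss \<sigma> by blast
    then obtain j' where j': "j' \<in> ?Ip" "j' \<notin> supp_set n \<gamma> l" by blast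
    have "supp_set n \<gamma> l \<subseteq> F \<union> (I - {j'})" using st j' IpI by auto
    thus "\<exists>\<tau>\<in>E. supp_set n \<gamma> l \<subseteq> \<tau>" using EI sF j' by blast
  qed
  have partB: "S_set n v Tp \<gamma> - S_set n v E \<gamma> = S_set n v Tm \<gamma> - S_set n v (ess_minus n I h Tm) \<gamma>"
  proof (rule set_eqI)
    fix l
    let ?P = "\<lambda>C. \<exists>\<sigma>\<in>C. supp_set n \<gamma> l \<subseteq> \<sigma>"
    have a: "?P Tp \<and> \<not> ?P E \<longleftrightarrow> ?P (Tp - E) \<and> \<not> ?P E" by blast
    have b: "?P Tm \<and> \<not> ?P New \<longleftrightarrow> ?P (Tp - E) \<and> \<not> ?P New" using Tm_eq by blast
    have c: "?P (Tp - E) \<and> \<not> ?P E \<longleftrightarrow> ?P (Tp - E) \<and> \<not> ?P New" using c1 by blast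
    show "l \<in> S_set n v Tp \<gamma> - S_set n v E \<gamma> \<longleftrightarrow> l \<in> S_set n v Tm \<gamma> - S_set n v (ess_minus n I h Tm) \<gamma>"
    proof -
      have L: "l \<in> S_set n v Tp \<gamma> - S_set n v E \<gamma> \<longleftrightarrow> l \<in> latL n v \<and> ?P Tp \<and> \<not> ?P E"
        by (auto simp: S_set_def)
      have R: "l \<in> S_set n v Tm \<gamma> - S_set n v (ess_minus n I h Tm) \<gamma> \<longleftrightarrow> l \<in> latL n v \<and> ?P Tm \<and> \<not> ?P New"
        unfolding Em by (auto simp: S_set_def)
      show ?thesis unfolding L R by (rule prop_helper[OF a b c])
    qed
  qed

  have partC: "\<forall>t\<in>Icirc n h (\<lambda>j. expi (q j)).
     proj_h h ` S_set n v E \<gamma> = proj_h h ` S_set n v (ess_minus n I h Tm) (\<lambda>j. \<gamma> j + \<theta> t * real_of_int (h j))"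
  proof
    fix t assume t: "t \<in> Icirc n h (\<lambda>j. expi (q j))"
    define \<gamma>' where "\<gamma>' = (\<lambda>j. \<gamma> j + \<theta> t * real_of_int (h j))"
    from t obtain j1' where j1': "j1' \<in> ?Im" "expi (q j1') * t powi h j1' = 1" by (auto simp: Icirc_def)
    have j1n: "j1' < n" "h j1' < 0" using j1' by (auto simp: Iminus_def)
    have tt: "expi (\<theta> t) = t" using theta t by blast
    have e1: "expi (\<theta> t * real_of_int (h j1')) = t powi h j1'" using expi_powi[of "\<theta> t" "h j1'"] tt by simp
    have "expi (q j1' + \<theta> t * h j1') = expi 0" using j1'(2) e1 by (simp add: expi_add expi_0)
    hence Z1: "q j1' + \<theta> t * h j1' - 0 \<in> \<int>" by (rule expi_diff_Ints)
    show "proj_h h ` S_set n v E \<gamma> = proj_h h ` S_set n v (ess_minus n I h Tm) \<gamma>'"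
    proof (rule image_eq_both)
      fix l assume "l \<in> S_set n v E \<gamma>"
      then obtain F j0' where lL: "l \<in> latL n v" and sF: "separating_plus n I h Tp F" and j0': "j0' \<in> ?Ip"
        and st: "supp_set n \<gamma> l \<subseteq> F \<union> (I - {j0'})" unfolding S_set_def E_def ess_plus_def by blast
      have "real_of_int (l j1') + (\<gamma> j1' - q j1') + (q j1' + \<theta> t * h j1') \<in> \<int>"
        using Ints_add[OF Ints_add[OF Ints_of_int gq[OF j1n(1)]] Z1[simplified]] by simp
      then obtain M :: int where M: "real_of_int (l j1') + \<gamma> j1' + \<theta> t * h j1' = of_int M"
        by (auto elim!: Ints_cases simp: algebra_simps)
      define k where "k = - \<bar>M\<bar>"
      have "\<bar>M\<bar> * 1 \<le> \<bar>M\<bar> * (- h j1')" using j1n by (intro mult_left_mono) auto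
      hence Mk: "0 \<le> M + k * h j1'" unfolding k_def by simp
      define l' where "l' = (\<lambda>j. l j + k * h j)"
      have l'L: "l' \<in> latL n v" unfolding l'_def by (rule latL_shift[OF lL hL])
      have "supp_set n \<gamma>' l' \<subseteq> F \<union> (I - {j1'})"
      proof
        fix i assume i: "i \<in> supp_set n \<gamma>' l'"
        show "i \<in> F \<union> (I - {j1'})"
        proof (cases "i \<in> I")
          case True
          have "i \<noteq> j1'"
          proof
            assume "i = j1'"
            have "real_of_int (l' j1') + \<gamma>' j1' = real_of_int (M + k * h j1')"
              using M unfolding l'_def \<gamma>'_def by (simp add: algebra_simps)
            then obtain kk :: nat where "real_of_int (l' j1') + \<gamma>' j1' = real kk"
              using int_nonneg_nat Mk by blast
            thus False using i \<open>i = j1'\<close> by (simp add: supp_iff)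
          qed
          thus ?thesis using True by blast
        next
          case False
          hence "h i = 0" using hout by blast
          hence "i \<in> supp_set n \<gamma> l" using i unfolding supp_iff l'_def \<gamma>'_def by simp
          thus ?thesis using st False by blast
        qed
      qed
      moreover have "F \<union> (I - {j1'}) \<in> ess_minus n I h Tm" using Em NewI sF j1' by blast
      ultimately have "l' \<in> S_set n v (ess_minus n I h Tm) \<gamma>'" using l'L unfolding S_set_def by blast
      moreover have "proj_h h l' = proj_h h l" unfolding l'_def by (rule proj_shift)
      ultimately show "\<exists>b\<in>S_set n v (ess_minus n I h Tm) \<gamma>'. proj_h h b = proj_h h l" by blast
    next
      fix l assume "l \<in> S_set n v (ess_minus n I h Tm) \<gamma>'"
      then obtain F j where lL: "l \<in> latL n v" and sF: "separating_plus n I h Tp F" and j: "j \<in> ?Im"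
        and st: "supp_set n \<gamma>' l \<subseteq> F \<union> (I - {j})" unfolding S_set_def Em New_def by blast
      obtain j0' where j0': "j0' \<in> ?Ip" "j0' \<notin> \<sigma>0" using noplus[OF box_cone] by blast
      have j0n: "j0' < n" "h j0' > 0" using j0' by (auto simp: Iplus_def)
      have "q j0' = 0" using box_supp j0n j0' by blast
      have "real_of_int (l j0') + (\<gamma> j0' - q j0') \<in> \<int>" by (rule Ints_add[OF Ints_of_int gq[OF j0n(1)]])
      hence "real_of_int (l j0') + \<gamma> j0' \<in> \<int>" using \<open>q j0' = 0\<close> by simp
      then obtain M :: int where M: "real_of_int (l j0') + \<gamma> j0' = of_int M"
        by (metis Ints_cases)
      define k where "k = \<bar>M\<bar>"
      have "\<bar>M\<bar> * 1 \<le> \<bar>M\<bar> * h j0'" using j0n by (intro mult_left_mono) auto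
      hence Mk: "0 \<le> M + k * h j0'" unfolding k_def by simp
      define l' where "l' = (\<lambda>j. l j + k * h j)"
      have l'L: "l' \<in> latL n v" unfolding l'_def by (rule latL_shift[OF lL hL])
      have "supp_set n \<gamma> l' \<subseteq> F \<union> (I - {j0'})"
      proof
        fix i assume i: "i \<in> supp_set n \<gamma> l'"
        show "i \<in> F \<union> (I - {j0'})"
        proof (cases "i \<in> I")
          case True
          have "i \<noteq> j0'"
          proof
            assume "i = j0'"
            have "real_of_int (l' j0') + \<gamma> j0' = real_of_int (M + k * h j0')"
              using M unfolding l'_def by (simp add: algebra_simps)
            then obtain kk :: nat where "real_of_int (l' j0') + \<gamma> j0' = real kk"
              using int_nonneg_nat Mk by blast
            thus False using i \<open>i = j0'\<close> by (simp add: supp_iff)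
          qed
          thus ?thesis using True by blast
        next
          case False
          hence "h i = 0" using hout by blast
          hence "i \<in> supp_set n \<gamma>' l" using i unfolding supp_iff l'_def \<gamma>'_def by simp
          thus ?thesis using st False by blast
        qed
      qed
      moreover have "F \<union> (I - {j0'}) \<in> E" using EI sF j0' by blast
      ultimately have "l' \<in> S_set n v E \<gamma>" using l'L unfolding S_set_def by blast
      moreover have "proj_h h l' = proj_h h l" unfolding l'_def by (rule proj_shift)
      ultimately show "\<exists>a\<in>S_set n v E \<gamma>. proj_h h a = proj_h h l" by blast
    qed
  qed
  have th1: "(\<lambda>j. \<gamma> j + \<theta> 1 * real_of_int (h j)) = \<gamma>" using theta1 by simp
  show ?thesis unfolding E_def[symmetric]
    by (intro conjI impI) (erule partA[rule_format], rule th1, rule partB, rule partC)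
qed

end
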